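(* Let $X$ be a graph and $\{a,b\},\{\alpha,\beta\}\in E(X)$. If the line graph $\mathcal{L}(X)$, with adjacency Hamiltonian, admits perfect state transfer from the vertex $ab$ to the vertex $\alpha\beta$ at time $\tau$, then $X$, with signless Laplacian Hamiltonian $Q$, admits perfect state transfer from $\mathbf e_a+\mathbf e_b$ to $\mathbf e_\alpha+\mathbf e_\beta$ at time $\tau$.
   Context: The line graph $\mathcal L(X)$ has vertex set $E(X)$, two edges being adjacent iff they share an endpoint in $X$; the vertex corresponding to edge $\{a,b\}$ is written $ab$ and its vertex state $\mathbf f_{ab}$. $Q=D+A$ is the signless Laplacian of $X$. Perfect state transfer from $\mathbf u$ to $\boldsymbol\mu$ at time $\tau$ with Hamiltonian $M$ means $e^{-\mathrm{i}\tau M}\mathbf u=\eta\boldsymbol\mu$ with $|\eta|=1$. *)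

theory Defs
  imports "HOL-Analysis.Analysis"
begin

text \<open>Matrices over a finite index set S are functions S => S => complex; vectors are S => complex
 (only values on S matter).\<close>

definition simple_graph :: "'v set \<Rightarrow> 'v set set \<Rightarrow> bool" where
  "simple_graph V E \<longleftrightarrow> finite V \<and> (\<forall>e\<in>E. e \<subseteq> V \<and> card e = 2)"

definition mat_apply :: "'i set \<Rightarrow> ('i \<Rightarrow> 'i \<Rightarrow> complex) \<Rightarrow> ('i \<Rightarrow> complex) \<Rightarrow> ('i \<Rightarrow> complex)" where
  "mat_apply S M v = (\<lambda>x. \<Sum>y\<in>S. M x y * v y)"

definition evolve :: "'i set \<Rightarrow> ('i \<Rightarrow> 'i \<Rightarrow> complex) \<Rightarrow> real \<Rightarrow> ('i \<Rightarrow> complex) \<Rightarrow> ('i \<Rightarrow> complex)" where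
  "evolve S M t v = (\<lambda>x. \<Sum>k. ((- \<i> * complex_of_real t) ^ k / fact k) * ((mat_apply S M ^^ k) v) x)"

definition pst :: "'i set \<Rightarrow> ('i \<Rightarrow> 'i \<Rightarrow> complex) \<Rightarrow> ('i \<Rightarrow> complex) \<Rightarrow> ('i \<Rightarrow> complex) \<Rightarrow> real \<Rightarrow> bool" where
  "pst S M u mu t \<longleftrightarrow> (\<exists>\<eta>. cmod \<eta> = 1 \<and> (\<forall>x\<in>S. evolve S M t u x = \<eta> * mu x))"

definition degree :: "'v set set \<Rightarrow> 'v \<Rightarrow> nat" where
  "degree E x = card {e\<in>E. x \<in> e}"

definition signless_laplacian :: "'v set set \<Rightarrow> 'v \<Rightarrow> 'v \<Rightarrow> complex" where
  "signless_laplacian E x y =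
     (if x = y then of_nat (degree E x) else if {x, y} \<in> E then 1 else 0)"

definition line_graph_adj :: "'v set set \<Rightarrow> 'v set \<Rightarrow> 'v set \<Rightarrow> complex" where
  "line_graph_adj E e f = (if e \<noteq> f \<and> e \<inter> f \<noteq> {} then 1 else 0)"

definition std_vec :: "'i \<Rightarrow> 'i \<Rightarrow> complex" where
  "std_vec a = (\<lambda>x. if x = a then 1 else 0)"

end

theory Submission imports Defs begin

definition nrm :: "'i set \<Rightarrow> ('i \<Rightarrow> complex) \<Rightarrow> real" where
  "nrm S w = (\<Sum>y\<in>S. cmod (w y))"

definition Kc :: "'i set \<Rightarrow> ('i \<Rightarrow> 'i \<Rightarrow> complex) \<Rightarrow> real" where
  "Kc S M = (\<Sum>x\<in>S. \<Sum>y\<in>S. cmod (M x y))"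

lemma nrm_ge: "finite S \<Longrightarrow> x \<in> S \<Longrightarrow> cmod (w x) \<le> nrm S w"
  unfolding nrm_def by (rule member_le_sum) auto

lemma nrm_nonneg: "0 \<le> nrm S w"
  unfolding nrm_def by (simp add: sum_nonneg)

lemma Kc_nonneg: "0 \<le> Kc S M"
  unfolding Kc_def by (simp add: sum_nonneg)

lemma nrm_apply: assumes "finite S"
  shows "nrm S (mat_apply S M w) \<le> Kc S M * nrm S w"
proof -
  have "nrm S (mat_apply S M w) \<le> (\<Sum>x\<in>S. \<Sum>y\<in>S. cmod (M x y) * cmod (w y))"
    unfolding nrm_def mat_apply_def
    by (rule sum_mono) (metis (no_types, lifting) norm_mult norm_sum sum.cong)
  also have "\<dots> \<le> (\<Sum>x\<in>S. \<Sum>y\<in>S. cmod (M x y) * nrm S w)"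
    by (intro sum_mono mult_left_mono nrm_ge assms) auto
  also have "\<dots> = Kc S M * nrm S w"
    unfolding Kc_def by (simp add: sum_distrib_right)
  finally show ?thesis .
qed

lemma nrm_pow: assumes "finite S"
  shows "nrm S ((mat_apply S M ^^ k) w) \<le> Kc S M ^ k * nrm S w"
proof (induction k)
  case 0 then show ?case by simp
next
  case (Suc k)
  have "nrm S ((mat_apply S M ^^ Suc k) w) \<le> Kc S M * nrm S ((mat_apply S M ^^ k) w)"
    using nrm_apply[OF assms] by simp
  also have "\<dots> \<le> Kc S M * (Kc S M ^ k * nrm S w)"
    by (intro mult_left_mono Suc Kc_nonneg)
  finally show ?case by (simp add: mult.assoc)
qed

lemma evolve_summable: assumes "finite S" "x \<in> S"
  shows "summable (\<lambda>k. norm (z ^ k / fact k * (mat_apply S M ^^ k) w x))"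
proof (rule summable_comparison_test)
  show "summable (\<lambda>k. nrm S w * (inverse (fact k) * (cmod z * Kc S M) ^ k))"
    by (intro summable_mult summable_exp)
  show "\<exists>N. \<forall>n\<ge>N. norm (norm (z ^ n / fact n * (mat_apply S M ^^ n) w x))
      \<le> nrm S w * (inverse (fact n) * (cmod z * Kc S M) ^ n)"
  proof (intro exI allI impI)
    fix n :: nat
    have b: "cmod ((mat_apply S M ^^ n) w x) \<le> Kc S M ^ n * nrm S w"
      using nrm_ge[OF assms, of "(mat_apply S M ^^ n) w"] nrm_pow[OF assms(1)] by (meson order_trans)
    have "norm (norm (z ^ n / fact n * (mat_apply S M ^^ n) w x))
        = cmod z ^ n / fact n * cmod ((mat_apply S M ^^ n) w x)"
      by (simp add: norm_mult norm_divide norm_power)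
    also have "\<dots> \<le> cmod z ^ n / fact n * (Kc S M ^ n * nrm S w)"
      by (intro mult_left_mono b) auto
    also have "\<dots> = nrm S w * (inverse (fact n) * (cmod z * Kc S M) ^ n)"
      by (simp add: power_mult_distrib field_simps)
    finally show "norm (norm (z ^ n / fact n * (mat_apply S M ^^ n) w x))
      \<le> nrm S w * (inverse (fact n) * (cmod z * Kc S M) ^ n)" .
  qed
qed

lemma binom_step:
  fixes u :: "nat \<Rightarrow> complex"
  shows "(\<Sum>j\<le>k. of_nat (k choose j) * c^(k-j) * u (Suc j)) + c * (\<Sum>j\<le>k. of_nat (k choose j) * c^(k-j) * u j)
       = (\<Sum>j\<le>Suc k. of_nat (Suc k choose j) * c^(Suc k - j) * u j)"
proof -
  have r: "(\<Sum>j\<le>Suc k. of_nat (Suc k choose j) * c^(Suc k - j) * u j)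
     = c^Suc k * u 0 + (\<Sum>j\<le>k. of_nat (Suc k choose Suc j) * c^(k - j) * u (Suc j))"
    by (subst sum.atMost_Suc_shift) simp
  have s: "(\<Sum>j\<le>k. of_nat (Suc k choose Suc j) * c^(k - j) * u (Suc j))
     = (\<Sum>j\<le>k. of_nat (k choose j) * c^(k-j) * u (Suc j)) + (\<Sum>j\<le>k. of_nat (k choose Suc j) * c^(k - j) * u (Suc j))"
    by (simp add: sum.distrib[symmetric] distrib_right)
  have t: "c * (\<Sum>j\<le>k. of_nat (k choose j) * c^(k-j) * u j)
      = (\<Sum>j\<le>Suc k. of_nat (k choose j) * c^(Suc k-j) * u j)"
    by (simp add: sum_distrib_left Suc_diff_le mult.assoc mult.left_commute)
  have v: "(\<Sum>j\<le>Suc k. of_nat (k choose j) * c^(Suc k-j) * u j)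
      = c^Suc k * u 0 + (\<Sum>j\<le>k. of_nat (k choose Suc j) * c^(k - j) * u (Suc j))"
    by (subst sum.atMost_Suc_shift) simp
  show ?thesis using r s t v by simp
qed

lemma apply_shift: assumes "y \<in> S" "finite S"
  shows "mat_apply S (\<lambda>p q. M p q + (if p = q then c else 0)) w y = mat_apply S M w y + c * w y"
proof -
  have "mat_apply S (\<lambda>p q. M p q + (if p = q then c else 0)) w y
     = (\<Sum>q\<in>S. M y q * w q + (if y = q then c * w q else 0))"
    unfolding mat_apply_def by (intro sum.cong refl) (simp add: distrib_right)
  also have "\<dots> = mat_apply S M w y + c * w y"
    unfolding mat_apply_def sum.distrib using assms by simp
  finally show ?thesis .
qed

lemma apply_cong: "(\<forall>q\<in>S. f q = g q) \<Longrightarrow> mat_apply S M f y = mat_apply S M g y"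
  unfolding mat_apply_def by simp

lemma apply_lin: "mat_apply S M (\<lambda>q. \<Sum>j\<in>J. f j * g j q) y = (\<Sum>j\<in>J. f j * mat_apply S M (g j) y)"
  unfolding mat_apply_def by (simp add: sum_distrib_left sum_distrib_right mult_ac sum.swap[of _ S])

lemma pow_shift: assumes "finite S"
  shows "\<forall>y\<in>S. (mat_apply S (\<lambda>p q. M p q + (if p = q then c else 0)) ^^ k) w y
     = (\<Sum>j\<le>k. of_nat (k choose j) * c^(k-j) * (mat_apply S M ^^ j) w y)"
proof (induction k)
  case 0 then show ?case by simp
next
  case (Suc k)
  let ?T' = "mat_apply S (\<lambda>p q. M p q + (if p = q then c else 0))"
  let ?T = "mat_apply S M"
  let ?B = "\<lambda>q. \<Sum>j\<le>k. of_nat (k choose j) * c^(k-j) * (?T ^^ j) w q"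
  show ?case
  proof
    fix y assume y: "y \<in> S"
    have "(?T' ^^ Suc k) w y = ?T' ((?T' ^^ k) w) y" by simp
    also have "\<dots> = ?T' ?B y"
      by (rule apply_cong) (use Suc in auto)
    also have "\<dots> = ?T ?B y + c * ?B y" using apply_shift[OF y assms] .
    also have "?T ?B y = (\<Sum>j\<le>k. of_nat (k choose j) * c^(k-j) * (?T ^^ Suc j) w y)"
      using apply_lin[of S M "\<lambda>j. of_nat (k choose j) * c^(k-j)" "\<lambda>j. (?T ^^ j) w" "{..k}" y]
      by (simp add: mult.assoc)
    finally show "(?T' ^^ Suc k) w y = (\<Sum>j\<le>Suc k. of_nat (Suc k choose j) * c^(Suc k-j) * (?T ^^ j) w y)"
      using binom_step[of k c "\<lambda>j. (?T ^^ j) w y"] by simp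
  qed
qed

lemma evolve_shift: assumes "finite S" "x \<in> S"
  shows "evolve S (\<lambda>p q. M p q + (if p = q then c else 0)) t w x
     = exp (- \<i> * complex_of_real t * c) * evolve S M t w x"
proof -
  define z where "z = - \<i> * complex_of_real t"
  define a where "a = (\<lambda>j. z ^ j / fact j * (mat_apply S M ^^ j) w x)"
  define b where "b = (\<lambda>l. (z * c) ^ l / fact l :: complex)"
  have sa: "summable (\<lambda>k. norm (a k))" unfolding a_def by (rule evolve_summable[OF assms])
  have sb: "summable (\<lambda>k. norm (b k))"
  proof -
    have "norm (b k) = inverse (fact k) * cmod (z*c) ^ k" for k
      unfolding b_def by (simp add: norm_divide norm_power norm_mult norm_inverse divide_inverse mult.commute)
    then show ?thesis using summable_exp[of "cmod (z*c)"] by simp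
  qed
  have eb: "(\<Sum>k. b k) = exp (z * c)"
    using exp_converges[of "z*c"] unfolding b_def
    by (simp add: sums_iff scaleR_conv_of_real divide_inverse mult.commute)
  have trm: "z ^ k / fact k * (\<Sum>j\<le>k. of_nat (k choose j) * c^(k-j) * (mat_apply S M ^^ j) w x)
      = (\<Sum>j\<le>k. a j * b (k - j))" for k
    unfolding sum_distrib_left a_def b_def
  proof (intro sum.cong refl)
    fix j assume "j \<in> {..k}"
    then have jk: "j \<le> k" by simp
    have zk: "z ^ k = z ^ j * z ^ (k - j)" using jk by (simp add: power_add[symmetric])
    show "z ^ k / fact k * (of_nat (k choose j) * c ^ (k - j) * (mat_apply S M ^^ j) w x) =
         z ^ j / fact j * (mat_apply S M ^^ j) w x * ((z * c) ^ (k - j) / fact (k - j))"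
      using jk by (simp add: binomial_fact zk power_mult_distrib field_simps)
  qed
  have "evolve S (\<lambda>p q. M p q + (if p = q then c else 0)) t w x
      = (\<Sum>k. \<Sum>j\<le>k. a j * b (k - j))"
    unfolding evolve_def z_def[symmetric] using pow_shift[OF assms(1)] assms(2) trm by simp
  also have "\<dots> = (\<Sum>k. a k) * (\<Sum>k. b k)" by (rule Cauchy_product[OF sa sb, symmetric])
  also have "(\<Sum>k. a k) = evolve S M t w x" unfolding a_def evolve_def z_def ..
  finally show ?thesis using eb z_def by (simp add: mult.commute)
qed

definition Ind :: "'v \<Rightarrow> 'v set \<Rightarrow> complex" where
  "Ind x e = (if x \<in> e then 1 else 0)"

definition inc :: "'v set set \<Rightarrow> ('v set \<Rightarrow> complex) \<Rightarrow> 'v \<Rightarrow> complex" where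
  "inc E w = (\<lambda>x. \<Sum>e\<in>E. Ind x e * w e)"

lemma sum_Ind_card: assumes "finite A" shows "(\<Sum>y\<in>A. (if P y then 1 else 0 :: complex)) = of_nat (card {y\<in>A. P y})"
proof -
  have "A \<inter> Collect P = {y\<in>A. P y}" by blast
  then show ?thesis using assms by (simp add: sum.If_cases)
qed

lemma G1: assumes "simple_graph V E" "e \<in> E" "f \<in> E"
  shows "(\<Sum>y\<in>V. Ind y e * Ind y f) = line_graph_adj E e f + (if e = f then 2 else 0)"
proof -
  have fin: "finite V" and ce: "card e = 2" and cf: "card f = 2" and eV: "e \<subseteq> V" and fV: "f \<subseteq> V"
    using assms unfolding simple_graph_def by auto
  have fe: "finite e" "finite f" using ce cf card.infinite zero_neq_numeral by metis+
  have "(\<Sum>y\<in>V. Ind y e * Ind y f) = (\<Sum>y\<in>V. (if y \<in> e \<inter> f then 1 else 0 :: complex))"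
    unfolding Ind_def by (intro sum.cong refl) auto
  also have "\<dots> = of_nat (card (e \<inter> f))"
  proof -
    have "{y\<in>V. y \<in> e \<inter> f} = e \<inter> f" using eV by auto
    then show ?thesis using sum_Ind_card[OF fin, of "\<lambda>y. y \<in> e \<inter> f"] by simp
  qed
  also have "\<dots> = line_graph_adj E e f + (if e = f then 2 else 0)"
  proof (cases "e = f")
    case True then show ?thesis using ce by (simp add: line_graph_adj_def)
  next
    case False
    have "card (e \<inter> f) \<noteq> 2"
    proof
      assume h: "card (e \<inter> f) = 2"
      have "e \<inter> f = e" using card_subset_eq[OF fe(1), of "e \<inter> f"] h ce by auto
      moreover have "e \<inter> f = f" using card_subset_eq[OF fe(2), of "e \<inter> f"] h cf by auto
      ultimately show False using False by auto
    qed
    moreover have "card (e \<inter> f) \<le> 2" using card_mono[OF fe(1), of "e \<inter> f"] ce by auto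
    ultimately have "card (e \<inter> f) = 0 \<or> card (e \<inter> f) = 1" by auto
    then show ?thesis using False fe by (auto simp: line_graph_adj_def)
  qed
  finally show ?thesis .
qed

lemma G2: assumes "simple_graph V E"
  shows "(\<Sum>e\<in>E. Ind x e * Ind y e) = signless_laplacian E x y"
proof -
  have finE: "finite E"
  proof -
    have "E \<subseteq> Pow V" using assms unfolding simple_graph_def by auto
    moreover have "finite (Pow V)" using assms unfolding simple_graph_def by simp
    ultimately show ?thesis by (rule finite_subset)
  qed
  have "(\<Sum>e\<in>E. Ind x e * Ind y e) = (\<Sum>e\<in>E. (if x \<in> e \<and> y \<in> e then 1 else 0 :: complex))"
    unfolding Ind_def by (intro sum.cong refl) auto
  also have "\<dots> = of_nat (card {e\<in>E. x \<in> e \<and> y \<in> e})" by (rule sum_Ind_card[OF finE])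
  also have "\<dots> = signless_laplacian E x y"
  proof (cases "x = y")
    case True then show ?thesis by (simp add: signless_laplacian_def degree_def)
  next
    case False
    have efact: "e = {x,y}" if "e \<in> E" "x \<in> e" "y \<in> e" for e
    proof -
      have ce: "card e = 2" using assms that unfolding simple_graph_def by auto
      then have fe: "finite e" using card.infinite zero_neq_numeral by metis
      have c2: "card {x,y} = 2" using False by simp
      have sub: "{x,y} \<subseteq> e" using that by simp
      have "{x,y} = e" using card_subset_eq[OF fe sub] ce c2 by simp
      then show ?thesis by simp
    qed
    have "{e\<in>E. x \<in> e \<and> y \<in> e} = (if {x,y} \<in> E then {{x,y}} else {})"
    proof (cases "{x,y} \<in> E")
      case True
      have "{e\<in>E. x \<in> e \<and> y \<in> e} \<subseteq> {{x,y}}" using efact by blast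
      moreover have "{{x,y}} \<subseteq> {e\<in>E. x \<in> e \<and> y \<in> e}" using True by simp
      ultimately show ?thesis using True by auto
    next
      case F2: False
      have "{e\<in>E. x \<in> e \<and> y \<in> e} = {}"
      proof (rule equals0I)
        fix e assume "e \<in> {e\<in>E. x \<in> e \<and> y \<in> e}"
        then have "e \<in> E" "x \<in> e" "y \<in> e" by simp_all
        then have "e = {x,y}" by (rule efact)
        then show False using F2 \<open>e \<in> E\<close> by simp
      qed
      then show ?thesis using F2 by simp
    qed
    then show ?thesis using False by (simp add: signless_laplacian_def)
  qed
  finally show ?thesis .
qed

definition LA :: "'v set set \<Rightarrow> 'v set \<Rightarrow> 'v set \<Rightarrow> complex" where
  "LA E = (\<lambda>e f. line_graph_adj E e f + (if e = f then 2 else 0))"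

lemma G3: assumes "simple_graph V E"
  shows "inc E (mat_apply E (LA E) w) = mat_apply V (signless_laplacian E) (inc E w)"
proof
  fix x
  have "inc E (mat_apply E (LA E) w) x
     = (\<Sum>e\<in>E. Ind x e * (\<Sum>f\<in>E. (\<Sum>y\<in>V. Ind y e * Ind y f) * w f))"
    unfolding inc_def mat_apply_def LA_def using G1[OF assms] by simp
  also have "\<dots> = (\<Sum>e\<in>E. \<Sum>f\<in>E. \<Sum>y\<in>V. Ind x e * Ind y e * Ind y f * w f)"
    by (simp add: sum_distrib_left sum_distrib_right mult.assoc)
  also have "\<dots> = (\<Sum>e\<in>E. \<Sum>y\<in>V. \<Sum>f\<in>E. Ind x e * Ind y e * Ind y f * w f)"
    by (intro sum.cong refl) (rule sum.swap)
  also have "\<dots> = (\<Sum>y\<in>V. \<Sum>e\<in>E. \<Sum>f\<in>E. Ind x e * Ind y e * Ind y f * w f)"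
    by (rule sum.swap)
  also have "\<dots> = (\<Sum>y\<in>V. (\<Sum>e\<in>E. Ind x e * Ind y e) * (\<Sum>f\<in>E. Ind y f * w f))"
    by (simp add: sum_distrib_left sum_distrib_right mult.assoc) (rule sum.cong[OF refl], rule sum.swap)
  also have "\<dots> = mat_apply V (signless_laplacian E) (inc E w) x"
    unfolding inc_def mat_apply_def using G2[OF assms] by simp
  finally show "inc E (mat_apply E (LA E) w) x = mat_apply V (signless_laplacian E) (inc E w) x" .
qed

lemma G4: assumes "simple_graph V E"
  shows "inc E ((mat_apply E (LA E) ^^ k) w) = (mat_apply V (signless_laplacian E) ^^ k) (inc E w)"
  by (induction k) (simp_all add: G3[OF assms])

lemma finE: "simple_graph V E \<Longrightarrow> finite E"
proof -
  assume a: "simple_graph V E"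
  have "E \<subseteq> Pow V" using a unfolding simple_graph_def by auto
  moreover have "finite (Pow V)" using a unfolding simple_graph_def by simp
  ultimately show ?thesis by (rule finite_subset)
qed

lemma G5: assumes "simple_graph V E"
  shows "evolve V (signless_laplacian E) t (inc E u) x = inc E (evolve E (LA E) t u) x"
proof -
  define z where "z = - \<i> * complex_of_real t"
  have fE: "finite E" using finE[OF assms] .
  have sm: "summable (\<lambda>k. z ^ k / fact k * (mat_apply E (LA E) ^^ k) u e)" if "e \<in> E" for e
    by (rule summable_norm_cancel[OF evolve_summable[OF fE that]])
  have "evolve V (signless_laplacian E) t (inc E u) x
      = (\<Sum>k. z ^ k / fact k * inc E ((mat_apply E (LA E) ^^ k) u) x)"
    unfolding evolve_def z_def[symmetric] G4[OF assms] ..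
  also have "\<dots> = (\<Sum>k. \<Sum>e\<in>E. Ind x e * (z ^ k / fact k * (mat_apply E (LA E) ^^ k) u e))"
    unfolding inc_def by (simp add: sum_distrib_left mult_ac)
  also have "\<dots> = (\<Sum>e\<in>E. \<Sum>k. Ind x e * (z ^ k / fact k * (mat_apply E (LA E) ^^ k) u e))"
    by (rule suminf_sum) (intro summable_mult sm)
  also have "\<dots> = (\<Sum>e\<in>E. Ind x e * (\<Sum>k. z ^ k / fact k * (mat_apply E (LA E) ^^ k) u e))"
  proof (intro sum.cong refl)
    fix e assume "e \<in> E"
    show "(\<Sum>k. Ind x e * (z ^ k / fact k * (mat_apply E (LA E) ^^ k) u e))
        = Ind x e * (\<Sum>k. z ^ k / fact k * (mat_apply E (LA E) ^^ k) u e)"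
      by (rule suminf_mult[OF sm[OF \<open>e \<in> E\<close>]])
  qed
  also have "\<dots> = inc E (evolve E (LA E) t u) x"
    unfolding inc_def evolve_def z_def ..
  finally show ?thesis .
qed

theorem mainTheorem10:
  fixes V :: "'v set" and E :: "'v set set" and a b \<alpha> \<beta> :: 'v and \<tau> :: real
  assumes "simple_graph V E"
    and "{a, b} \<in> E" and "{\<alpha>, \<beta>} \<in> E"
    and "pst E (line_graph_adj E) (std_vec {a, b}) (std_vec {\<alpha>, \<beta>}) \<tau>"
  shows "pst V (signless_laplacian E) (\<lambda>x. std_vec a x + std_vec b x)
           (\<lambda>x. std_vec \<alpha> x + std_vec \<beta> x) \<tau>"
proof -
  have fE: "finite E" using finE[OF assms(1)] .
  obtain \<eta> where eta: "cmod \<eta> = 1"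
    and ev: "\<forall>e\<in>E. evolve E (line_graph_adj E) \<tau> (std_vec {a, b}) e = \<eta> * std_vec {\<alpha>, \<beta>} e"
    using assms(4) unfolding pst_def by blast
  have ab: "a \<noteq> b" using assms(1,2) unfolding simple_graph_def by fastforce
  have \<alpha>\<beta>: "\<alpha> \<noteq> \<beta>" using assms(1,3) unfolding simple_graph_def by fastforce
  have incstd: "inc E (std_vec f) = (\<lambda>x. Ind x f)" if "f \<in> E" for f
  proof
    fix x
    have "inc E (std_vec f) x = (\<Sum>e\<in>E. if e = f then Ind x e else 0)"
      unfolding inc_def std_vec_def by (intro sum.cong refl) auto
    also have "\<dots> = Ind x f" using that fE by simp
    finally show "inc E (std_vec f) x = Ind x f" .
  qed
  have u: "(\<lambda>x. std_vec a x + std_vec b x) = inc E (std_vec {a, b})"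
    unfolding incstd[OF assms(2)] using ab by (auto simp: std_vec_def Ind_def)
  define \<eta>' where "\<eta>' = exp (- \<i> * complex_of_real \<tau> * 2) * \<eta>"
  have "cmod \<eta>' = 1" unfolding \<eta>'_def using eta by (simp add: norm_mult)
  moreover have "\<forall>x\<in>V. evolve V (signless_laplacian E) \<tau> (\<lambda>x. std_vec a x + std_vec b x) x
      = \<eta>' * (std_vec \<alpha> x + std_vec \<beta> x)"
  proof
    fix x assume "x \<in> V"
    have shE: "evolve E (LA E) \<tau> (std_vec {a, b}) e = \<eta>' * std_vec {\<alpha>, \<beta>} e" if "e \<in> E" for e
      unfolding LA_def \<eta>'_def using evolve_shift[OF fE that, of "line_graph_adj E" 2 \<tau> "std_vec {a, b}"]
        ev that by simp
    have "evolve V (signless_laplacian E) \<tau> (\<lambda>x. std_vec a x + std_vec b x) x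
        = inc E (evolve E (LA E) \<tau> (std_vec {a, b})) x"
      unfolding u by (rule G5[OF assms(1)])
    also have "\<dots> = inc E (\<lambda>e. \<eta>' * std_vec {\<alpha>, \<beta>} e) x"
      unfolding inc_def using shE by simp
    also have "\<dots> = \<eta>' * inc E (std_vec {\<alpha>, \<beta>}) x"
      unfolding inc_def by (simp add: sum_distrib_left mult_ac)
    also have "\<dots> = \<eta>' * (std_vec \<alpha> x + std_vec \<beta> x)"
      unfolding incstd[OF assms(3)] using \<alpha>\<beta> by (auto simp: std_vec_def Ind_def)
    finally show "evolve V (signless_laplacian E) \<tau> (\<lambda>x. std_vec a x + std_vec b x) x
      = \<eta>' * (std_vec \<alpha> x + std_vec \<beta> x)" .
  qed
  ultimately show ?thesis unfolding pst_def by blast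
qed

end
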